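(* Let $\pi$ be a probability measure on $\mathcal{B}_n=\{0,1\}^n$ and $L$ the generator of a $\pi$-reversible flip-swap random walk on $\mathcal{B}_n$ which is $R$-stable for some $R\ge0$. Then for any nonempty $A\subset\mathcal{B}_n$ and every $x\in\mathrm{supp}\,\pi$, \[ \Gamma_+\big(d_T^2(\cdot,A)\big)(x)\le8R\rho(L)\,d_T^2(x,A). \] Moreover, for all $x,y\in\mathcal{B}_n$ and any nonempty $A\subset\mathcal{B}_n$, $d_T^2(x,A)-d_T^2(y,A)\le d_H(x,y)$.
   Context: A generator on $\mathcal{B}_n$ is a real matrix $L=(L(x,y))$ with $L(x,y)\ge0$ for $x\ne y$ and zero row sums; $\pi$-reversible: $\pi(x)L(x,y)=\pi(y)L(y,x)$. With $(Lg)(x)=\sum_yL(x,y)g(y)$, $\mathcal{E}(f,g)=-\sum_x\pi(x)f(x)(Lg)(x)$, $\mathrm{Ent}_\pi(f)=\pi(f\log f)-\pi(f)\log\pi(f)$, $\rho(L)$ is the largest constant with $\rho(L)\mathrm{Ent}_\pi(f)\le\mathcal{E}(f,\log f)$ for all non-constant $f\ge0$. Flip-swap: $L(x,y)>0$, $x\ne y$, implies $y$ differs from $x$ by flipping one coordinate or swapping two unequal coordinates. $R$-stable: $\rho(L)>0$ and $\max_{x\in\mathrm{supp}\,\pi,\,i\in[n]}\sum_{y:y_i\ne x_i}L(x,y)\le R\rho(L)$. $\Gamma_+(g)(x)=\sum_y(g(x)-g(y))_+^2L(x,y)$. $d_H(x,y)=\sum_i\mathbf{1}\{x_i\ne y_i\}$;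 $d_\alpha(x,y)=\sum_i\alpha_i\mathbf{1}\{x_i\ne y_i\}$, $d_\alpha(x,A)=\min_{y\in A}d_\alpha(x,y)$, $d_T(x,A)=\sup\{d_\alpha(x,A):\alpha\in[0,\infty)^n,|\alpha|\le1\}$. *)

theory Defs
  imports "HOL-Analysis.Analysis"
begin

text \<open>The hypercube B_n is modelled as the type 'n \<Rightarrow> bool for a finite index type 'n
  (so n = CARD('n)).  Measures and generators are real-valued functions/matrices.\<close>

type_synonym 'n cube = "'n \<Rightarrow> bool"

definition prob_on :: "('n::finite cube \<Rightarrow> real) \<Rightarrow> bool" where
  "prob_on \<mu> \<longleftrightarrow> (\<forall>x. \<mu> x \<ge> 0) \<and> (\<Sum>x\<in>UNIV. \<mu> x) = 1"

definition generator :: "('n::finite cube \<Rightarrow> 'n cube \<Rightarrow> real) \<Rightarrow> bool" where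
  "generator L \<longleftrightarrow> (\<forall>x y. x \<noteq> y \<longrightarrow> L x y \<ge> 0) \<and> (\<forall>x. (\<Sum>y\<in>UNIV. L x y) = 0)"

definition reversible :: "('n::finite cube \<Rightarrow> real) \<Rightarrow> ('n cube \<Rightarrow> 'n cube \<Rightarrow> real) \<Rightarrow> bool" where
  "reversible \<mu> L \<longleftrightarrow> (\<forall>x y. \<mu> x * L x y = \<mu> y * L y x)"

definition flip_swap :: "('n::finite cube \<Rightarrow> 'n cube \<Rightarrow> real) \<Rightarrow> bool" where
  "flip_swap L \<longleftrightarrow> (\<forall>x y. L x y > 0 \<and> x \<noteq> y \<longrightarrow>
      (\<exists>i. y = x(i := \<not> x i)) \<or>
      (\<exists>i j. x i \<noteq> x j \<and> y = x(i := x j, j := x i)))"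

definition gen_apply :: "('n::finite cube \<Rightarrow> 'n cube \<Rightarrow> real) \<Rightarrow> ('n cube \<Rightarrow> real) \<Rightarrow> 'n cube \<Rightarrow> real" where
  "gen_apply L g x = (\<Sum>y\<in>UNIV. L x y * g y)"

definition dirichlet :: "('n::finite cube \<Rightarrow> real) \<Rightarrow> ('n cube \<Rightarrow> 'n cube \<Rightarrow> real)
    \<Rightarrow> ('n cube \<Rightarrow> real) \<Rightarrow> ('n cube \<Rightarrow> real) \<Rightarrow> real" where
  "dirichlet \<mu> L f g = - (\<Sum>x\<in>UNIV. \<mu> x * f x * gen_apply L g x)"

definition expect :: "('n::finite cube \<Rightarrow> real) \<Rightarrow> ('n cube \<Rightarrow> real) \<Rightarrow> real" where
  "expect \<mu> f = (\<Sum>x\<in>UNIV. \<mu> x * f x)"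

definition Ent :: "('n::finite cube \<Rightarrow> real) \<Rightarrow> ('n cube \<Rightarrow> real) \<Rightarrow> real" where
  "Ent \<mu> f = expect \<mu> (\<lambda>x. f x * ln (f x)) - expect \<mu> f * ln (expect \<mu> f)"

text \<open>Modified log-Sobolev inequality with constant r, tested on positive non-constant f
  (equivalent to f \<ge> 0 with the conventions log 0 = -\<infinity>, 0 log 0 = 0).\<close>
definition mlsi :: "('n::finite cube \<Rightarrow> real) \<Rightarrow> ('n cube \<Rightarrow> 'n cube \<Rightarrow> real) \<Rightarrow> real \<Rightarrow> bool" where
  "mlsi \<mu> L r \<longleftrightarrow> (\<forall>f. (\<forall>x. f x > 0) \<and> \<not> (\<forall>x y. f x = f y) \<longrightarrow>
      r * Ent \<mu> f \<le> dirichlet \<mu> L f (\<lambda>x. ln (f x)))"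

definition is_rho :: "('n::finite cube \<Rightarrow> real) \<Rightarrow> ('n cube \<Rightarrow> 'n cube \<Rightarrow> real) \<Rightarrow> real \<Rightarrow> bool" where
  "is_rho \<mu> L r \<longleftrightarrow> mlsi \<mu> L r \<and> (\<forall>r'. mlsi \<mu> L r' \<longrightarrow> r' \<le> r)"

definition rho :: "('n::finite cube \<Rightarrow> real) \<Rightarrow> ('n cube \<Rightarrow> 'n cube \<Rightarrow> real) \<Rightarrow> real" where
  "rho \<mu> L = (THE r. is_rho \<mu> L r)"

definition R_stable :: "('n::finite cube \<Rightarrow> real) \<Rightarrow> ('n cube \<Rightarrow> 'n cube \<Rightarrow> real) \<Rightarrow> real \<Rightarrow> bool" where
  "R_stable \<mu> L R \<longleftrightarrow> (\<exists>r. is_rho \<mu> L r) \<and> rho \<mu> L > 0 \<and>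
     (\<forall>x i. \<mu> x > 0 \<longrightarrow> (\<Sum>y\<in>{y. y i \<noteq> x i}. L x y) \<le> R * rho \<mu> L)"

definition Gamma_plus :: "('n::finite cube \<Rightarrow> 'n cube \<Rightarrow> real) \<Rightarrow> ('n cube \<Rightarrow> real) \<Rightarrow> 'n cube \<Rightarrow> real" where
  "Gamma_plus L g x = (\<Sum>y\<in>UNIV. (max (g x - g y) 0)^2 * L x y)"

definition dH :: "'n::finite cube \<Rightarrow> 'n cube \<Rightarrow> real" where
  "dH x y = real (card {i. x i \<noteq> y i})"

definition d_alpha :: "('n::finite \<Rightarrow> real) \<Rightarrow> 'n cube \<Rightarrow> 'n cube \<Rightarrow> real" where
  "d_alpha \<alpha> x y = (\<Sum>i\<in>UNIV. \<alpha> i * (if x i \<noteq> y i then 1 else 0))"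

definition d_alpha_set :: "('n::finite \<Rightarrow> real) \<Rightarrow> 'n cube \<Rightarrow> 'n cube set \<Rightarrow> real" where
  "d_alpha_set \<alpha> x A = Min ((\<lambda>y. d_alpha \<alpha> x y) ` A)"

definition dT :: "'n::finite cube \<Rightarrow> 'n cube set \<Rightarrow> real" where
  "dT x A = (SUP \<alpha>\<in>{\<alpha>. (\<forall>i. \<alpha> i \<ge> 0) \<and> sqrt (\<Sum>i\<in>UNIV. (\<alpha> i)^2) \<le> 1}. d_alpha_set \<alpha> x A)"

end

theory Submission
  imports Defs
begin

definition uvec :: "'n::finite cube \<Rightarrow> 'n cube \<Rightarrow> real^'n" where
  "uvec x z = (\<chi> i. if x i \<noteq> z i then 1 else 0)"

definition Kx :: "'n::finite cube \<Rightarrow> 'n cube set \<Rightarrow> (real^'n) set" where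
  "Kx x A = convex hull (uvec x ` A)"

definition adm :: "('n::finite \<Rightarrow> real) \<Rightarrow> bool" where
  "adm \<alpha> \<longleftrightarrow> (\<forall>i. \<alpha> i \<ge> 0) \<and> sqrt (\<Sum>i\<in>UNIV. (\<alpha> i)^2) \<le> 1"

lemma d_alpha_inner: "d_alpha \<alpha> x z = inner (\<chi> i. \<alpha> i) (uvec x z)"
  unfolding d_alpha_def uvec_def inner_vec_def by (intro sum.cong) auto

lemma norm_sq_vec: "(norm (w::real^'n::finite))^2 = (\<Sum>i\<in>UNIV. (w$i)^2)"
  unfolding power2_norm_eq_inner inner_vec_def by (simp add: power2_eq_square)

lemma Kx_nonneg:
  fixes x :: "'n::finite cube"
  assumes "w \<in> Kx x A" shows "w $ i \<ge> 0"
proof -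
  have "convex {w::real^'n. \<forall>i. w $ i \<ge> 0}"
    unfolding convex_def by (auto intro!: add_nonneg_nonneg mult_nonneg_nonneg)
  moreover have "uvec x ` A \<subseteq> {w::real^'n. \<forall>i. w $ i \<ge> 0}"
    by (auto simp: uvec_def)
  ultimately have "Kx x A \<subseteq> {w::real^'n. \<forall>i. w $ i \<ge> 0}"
    unfolding Kx_def by (rule hull_minimal[rotated])
  then show ?thesis using assms by auto
qed

lemma upper:
  fixes \<alpha> :: "'n::finite \<Rightarrow> real"
  assumes A: "A \<noteq> {}" and ad: "adm \<alpha>" and w: "w \<in> Kx x A"
  shows "d_alpha_set \<alpha> x A \<le> norm w"
proof -
  define m where "m = d_alpha_set \<alpha> x A"
  define a :: "real^'n" where "a = (\<chi> i. \<alpha> i)"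
  have fin: "finite A" by simp
  have "\<forall>z\<in>A. m \<le> d_alpha \<alpha> x z"
    unfolding m_def d_alpha_set_def using fin by (auto intro!: Min_le)
  hence "uvec x ` A \<subseteq> {w. inner a w \<ge> m}"
    by (auto simp: d_alpha_inner a_def)
  hence "Kx x A \<subseteq> {w. inner a w \<ge> m}"
    unfolding Kx_def by (intro hull_minimal convex_halfspace_ge)
  hence "m \<le> inner a w" using w by auto
  also have "\<dots> \<le> norm a * norm w" by (rule norm_cauchy_schwarz)
  also have "norm a \<le> 1"
  proof -
    have "(norm a)^2 = (\<Sum>i\<in>UNIV. (\<alpha> i)^2)" unfolding norm_sq_vec a_def by simp
    hence "norm a = sqrt (\<Sum>i\<in>UNIV. (\<alpha> i)^2)" by (metis norm_ge_zero real_sqrt_unique)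
    thus ?thesis using ad by (simp add: adm_def)
  qed
  hence "norm a * norm w \<le> norm w" by (simp add: mult_left_le_one_le)
  finally show ?thesis unfolding m_def .
qed

lemma adm0: "adm (\<lambda>i. 0)" by (simp add: adm_def)

lemma bdd: assumes "A \<noteq> {}" shows "bdd_above ((\<lambda>\<alpha>. d_alpha_set \<alpha> x A) ` {\<alpha>. adm \<alpha>})"
proof -
  obtain z where "z \<in> A" using assms by auto
  hence "uvec x z \<in> Kx x A" unfolding Kx_def by (simp add: hull_inc)
  thus ?thesis using upper[OF assms] by (auto intro!: bdd_aboveI)
qed

lemma dT_adm: "dT x A = (SUP \<alpha>\<in>{\<alpha>. adm \<alpha>}. d_alpha_set \<alpha> x A)"
  unfolding dT_def adm_def by simp

lemma dT_ge: assumes "A \<noteq> {}" "adm \<alpha>" shows "d_alpha_set \<alpha> x A \<le> dT x A"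
  unfolding dT_adm by (rule cSUP_upper) (use assms bdd[OF assms(1)] in auto)

lemma dT_le: assumes "A \<noteq> {}" "w \<in> Kx x A" shows "dT x A \<le> norm w"
  unfolding dT_adm using assms adm0 by (intro cSUP_least) (auto intro: upper)

lemma dalpha0: "A \<noteq> {} \<Longrightarrow> d_alpha_set (\<lambda>i. 0) x A = 0"
  unfolding d_alpha_set_def d_alpha_def by simp

lemma dT_nonneg: "A \<noteq> {} \<Longrightarrow> dT x A \<ge> 0"
  using dT_ge[OF _ adm0] dalpha0 by metis

lemma dT_char:
  assumes A: "A \<noteq> {}"
  shows "\<exists>v\<in>Kx x A. \<exists>\<alpha>. adm \<alpha> \<and> d_alpha_set \<alpha> x A = norm v \<and> dT x A = norm v"
proof -
  have fin: "finite (uvec x ` A)" by simp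
  have cK: "compact (Kx x A)" unfolding Kx_def by (rule finite_imp_compact_convex_hull[OF fin])
  have cv: "convex (Kx x A)" unfolding Kx_def by simp
  have ne: "Kx x A \<noteq> {}" unfolding Kx_def using A by simp
  obtain v where v: "v \<in> Kx x A" "\<And>w. w \<in> Kx x A \<Longrightarrow> dist 0 v \<le> dist 0 w"
    using distance_attains_inf[OF compact_imp_closed[OF cK] ne] by blast
  have dot: "inner v w \<ge> inner v v" if "w \<in> Kx x A" for w
    using any_closest_point_dot[OF cv compact_imp_closed[OF cK] v(1) that, of 0] v(2)
    by (auto simp: inner_diff_right)
  obtain \<alpha> where ad: "adm \<alpha>" and eq: "d_alpha_set \<alpha> x A = norm v"
  proof (cases "v = 0")
    case True
    then show ?thesis using that[OF adm0] dalpha0[OF A] by simp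
  next
    case False
    define \<alpha> where "\<alpha> i = v $ i / norm v" for i
    have nv: "norm v > 0" using False by simp
    have avec: "(\<chi> i. \<alpha> i) = v /\<^sub>R norm v"
      by (simp add: \<alpha>_def vec_eq_iff divide_inverse mult.commute)
    have "adm \<alpha>"
    proof -
      have "(\<Sum>i\<in>UNIV. (\<alpha> i)^2) = (norm (\<chi> i. \<alpha> i))^2" by (simp add: norm_sq_vec)
      also have "\<dots> = 1" using nv by (simp add: avec)
      finally show ?thesis unfolding adm_def \<alpha>_def using Kx_nonneg[OF v(1)] nv by simp
    qed
    moreover have "d_alpha_set \<alpha> x A = norm v"
    proof (rule antisym)
      show "d_alpha_set \<alpha> x A \<le> norm v" using upper[OF A \<open>adm \<alpha>\<close> v(1)] .
      have "norm v \<le> d_alpha \<alpha> x z" if "z \<in> A" for z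
      proof -
        have z: "uvec x z \<in> Kx x A" unfolding Kx_def using that by (simp add: hull_inc)
        have "d_alpha \<alpha> x z = inner v (uvec x z) / norm v"
          by (simp add: d_alpha_inner avec field_simps)
        also have "\<dots> \<ge> inner v v / norm v" using dot[OF z] nv by (simp add: divide_right_mono)
        moreover have "inner v v / norm v = norm v" using nv
          by (simp add: dot_square_norm power2_eq_square)
        ultimately show ?thesis by simp
      qed
      thus "norm v \<le> d_alpha_set \<alpha> x A" unfolding d_alpha_set_def using A by (auto intro!: Min.boundedI)
    qed
    ultimately show ?thesis using that by blast
  qed
  have "dT x A = norm v"
    using dT_le[OF A v(1)] dT_ge[OF A ad, of x] eq by linarith
  thus ?thesis using v(1) ad eq by blast
qed
lemma part2:
  fixes x y :: "'n::finite cube"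
  assumes A: "A \<noteq> {}"
  shows "(dT x A)^2 - (dT y A)^2 \<le> dH x y"
proof -
  obtain v \<alpha> where v: "v \<in> Kx y A" and dy: "dT y A = norm v"
    using dT_char[OF A, of y] by blast
  define \<phi> :: "real^'n \<Rightarrow> real^'n" where "\<phi> w = (\<chi> i. if x i = y i then w$i else 1 - w$i)" for w
  have cvx: "convex (Kx x A)" unfolding Kx_def by simp
  have "convex {w. \<phi> w \<in> Kx x A}"
    unfolding convex_def
  proof (intro allI ballI impI, clarify)
    fix u w :: "real^'n" and a b :: real
    assume u: "\<phi> u \<in> Kx x A" and w: "\<phi> w \<in> Kx x A" and ab: "0 \<le> a" "0 \<le> b" "a + b = 1"
    have "\<phi> (a *\<^sub>R u + b *\<^sub>R w) = a *\<^sub>R \<phi> u + b *\<^sub>R \<phi> w"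
      unfolding \<phi>_def vec_eq_iff using ab(3) by (auto simp: algebra_simps)
    moreover have "a *\<^sub>R \<phi> u + b *\<^sub>R \<phi> w \<in> Kx x A" using convexD[OF cvx u w ab] .
    ultimately show "\<phi> (a *\<^sub>R u + b *\<^sub>R w) \<in> Kx x A" by simp
  qed
  moreover have "uvec y ` A \<subseteq> {w. \<phi> w \<in> Kx x A}"
  proof clarify
    fix z assume "z \<in> A"
    hence "uvec x z \<in> Kx x A" unfolding Kx_def by (simp add: hull_inc)
    moreover have "\<phi> (uvec y z) = uvec x z" unfolding \<phi>_def uvec_def vec_eq_iff by auto
    ultimately show "\<phi> (uvec y z) \<in> Kx x A" by simp
  qed
  ultimately have "Kx y A \<subseteq> {w. \<phi> w \<in> Kx x A}" unfolding Kx_def by (rule hull_minimal[rotated])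
  hence pv: "\<phi> v \<in> Kx x A" using v by auto
  have "(dT x A)^2 \<le> (norm (\<phi> v))^2"
    using dT_le[OF A pv] dT_nonneg[OF A] by (simp add: power_mono)
  also have "\<dots> = (\<Sum>i\<in>UNIV. ((\<phi> v)$i)^2)" by (rule norm_sq_vec)
  finally have 1: "(dT x A)^2 - (dT y A)^2 \<le> (\<Sum>i\<in>UNIV. ((\<phi> v)$i)^2 - (v$i)^2)"
    unfolding dy norm_sq_vec sum_subtractf by simp
  also have "\<dots> \<le> (\<Sum>i\<in>UNIV. if x i \<noteq> y i then 1 else 0)"
  proof (rule sum_mono)
    fix i
    have "v $ i \<ge> 0" using Kx_nonneg[OF v] .
    thus "((\<phi> v)$i)^2 - (v$i)^2 \<le> (if x i \<noteq> y i then 1 else 0)"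
      unfolding \<phi>_def by (auto simp: power2_eq_square algebra_simps)
  qed
  also have "\<dots> = dH x y"
    unfolding dH_def by (simp add: sum.If_cases)
  finally show ?thesis .
qed

lemma nbr:
  fixes x y :: "'n::finite cube"
  assumes A: "A \<noteq> {}" and ad: "adm \<alpha>" and eq: "dT x A = d_alpha_set \<alpha> x A"
  shows "dT x A - dT y A \<le> (\<Sum>i\<in>UNIV. \<alpha> i * (if x i \<noteq> y i then 1 else 0))"
proof -
  define s where "s = (\<Sum>i\<in>UNIV. \<alpha> i * (if x i \<noteq> y i then 1 else 0))"
  have a0: "\<alpha> i \<ge> 0" for i using ad by (simp add: adm_def)
  have "d_alpha_set \<alpha> x A - s \<le> d_alpha \<alpha> y z" if z: "z \<in> A" for z
  proof -
    have "d_alpha_set \<alpha> x A \<le> d_alpha \<alpha> x z" unfolding d_alpha_set_def using z by (auto intro!: Min_le)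
    moreover have "d_alpha \<alpha> x z - s \<le> d_alpha \<alpha> y z"
      unfolding d_alpha_def s_def sum_subtractf[symmetric]
    proof (rule sum_mono)
      fix i show "\<alpha> i * (if x i \<noteq> z i then 1 else 0) - \<alpha> i * (if x i \<noteq> y i then 1 else 0)
           \<le> \<alpha> i * (if y i \<noteq> z i then 1 else 0)" using a0[of i] by auto
    qed
    ultimately show ?thesis by linarith
  qed
  hence "d_alpha_set \<alpha> x A - s \<le> d_alpha_set \<alpha> y A"
    unfolding d_alpha_set_def[of _ y] using A by (auto intro!: Min.boundedI)
  also have "\<dots> \<le> dT y A" by (rule dT_ge[OF A ad])
  finally show ?thesis using eq unfolding s_def by linarith
qed

lemma sq_bound:
  fixes m t s Q :: real
  assumes "0 \<le> t" "0 \<le> s" "m - t \<le> s" "s^2 \<le> 2 * Q" "0 \<le> m"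
  shows "(max (m^2 - t^2) 0)^2 \<le> 8 * m^2 * Q"
proof (cases "t \<le> m")
  case False
  hence "m^2 - t^2 \<le> 0" using assms by (simp add: power_mono)
  hence "max (m^2 - t^2) 0 = 0" by simp
  moreover have "Q \<ge> 0" using assms(4) by (smt (verit) zero_le_power2)
  ultimately show ?thesis by simp
next
  case True
  have "m^2 - t^2 = (m - t) * (m + t)" by (simp add: power2_eq_square algebra_simps)
  also have "\<dots> \<le> s * (2 * m)" using True assms by (intro mult_mono) auto
  finally have 1: "m^2 - t^2 \<le> s * (2*m)" .
  have 0: "0 \<le> m^2 - t^2" using True assms by (simp add: power_mono)
  hence "(max (m^2 - t^2) 0)^2 = (m^2 - t^2)^2" by simp
  also have "\<dots> \<le> (s * (2*m))^2" using 0 1 by (simp add: power_mono)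
  also have "\<dots> = 4 * m^2 * s^2" by (simp add: power2_eq_square)
  also have "\<dots> \<le> 4 * m^2 * (2 * Q)" using assms(4) by (intro mult_left_mono) auto
  finally show ?thesis by simp
qed

theorem lemma6p2:
  fixes \<mu> :: "'n::finite cube \<Rightarrow> real"
    and L :: "'n cube \<Rightarrow> 'n cube \<Rightarrow> real"
    and R :: real
  assumes "prob_on \<mu>"
    and "generator L"
    and "reversible \<mu> L"
    and "flip_swap L"
    and "R \<ge> 0"
    and "R_stable \<mu> L R"
  shows "(\<forall>A x. A \<noteq> {} \<and> \<mu> x > 0 \<longrightarrow>
            Gamma_plus L (\<lambda>z. (dT z A)^2) x \<le> 8 * R * rho \<mu> L * (dT x A)^2)
       \<and> (\<forall>(x::'n cube) y A. A \<noteq> {} \<longrightarrow> (dT x A)^2 - (dT y A)^2 \<le> dH x y)"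
proof (intro conjI allI impI)
  fix x y :: "'n cube" and A :: "'n cube set"
  assume "A \<noteq> {}"
  thus "(dT x A)^2 - (dT y A)^2 \<le> dH x y" by (rule part2)
next
  fix A :: "'n cube set" and x :: "'n cube"
  assume h: "A \<noteq> {} \<and> \<mu> x > 0"
  hence A: "A \<noteq> {}" and mx: "\<mu> x > 0" by auto
  obtain v :: "real^'n" and \<alpha> where ad: "adm \<alpha>" and e1: "d_alpha_set \<alpha> x A = norm v" and e2: "dT x A = norm v"
    using dT_char[OF A, of x] by blast
  define m where "m = dT x A"
  have m0: "m \<ge> 0" unfolding m_def using dT_nonneg[OF A] .
  have a0: "\<alpha> i \<ge> 0" for i using ad by (simp add: adm_def)
  have S1: "(\<Sum>i\<in>UNIV. (\<alpha> i)^2) \<le> 1"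
    using ad unfolding adm_def by (metis real_sqrt_le_1_iff)
  define Q where "Q y = (\<Sum>i\<in>UNIV. (\<alpha> i)^2 * (if x i \<noteq> y i then 1 else 0))" for y
  have gen: "\<And>y. x \<noteq> y \<Longrightarrow> L x y \<ge> 0" using assms(2) unfolding generator_def by blast
  have rs: "\<And>i. (\<Sum>y\<in>{y. y i \<noteq> x i}. L x y) \<le> R * rho \<mu> L" and rpos: "rho \<mu> L > 0"
    using assms(6) mx unfolding R_stable_def by auto
  have pt: "(max ((dT x A)^2 - (dT y A)^2) 0)^2 * L x y \<le> 8 * m^2 * Q y * L x y" for y
  proof (cases "L x y > 0 \<and> x \<noteq> y")
    case False
    hence "x = y \<or> L x y = 0" using gen[of y] by force
    moreover have "Q x = 0" unfolding Q_def by simp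
    ultimately show ?thesis by auto
  next
    case True
    define s where "s = (\<Sum>i\<in>UNIV. \<alpha> i * (if x i \<noteq> y i then 1 else 0))"
    have s0: "s \<ge> 0" unfolding s_def using a0 by (auto intro!: sum_nonneg)
    have d: "m - dT y A \<le> s" unfolding m_def s_def using nbr[OF A ad, of x y] e1 e2 by simp
    have sQ: "s^2 \<le> 2 * Q y"
    proof -
      have fs: "(\<lambda>i. f i * (if x i \<noteq> y i then 1 else 0)) = (\<lambda>i. if i \<in> {i. x i \<noteq> y i} then f i else 0)" for f :: "'n \<Rightarrow> real"
        by auto
      have sD: "s = sum \<alpha> {i. x i \<noteq> y i}" "Q y = (\<Sum>i\<in>{i. x i \<noteq> y i}. (\<alpha> i)^2)"
        unfolding s_def Q_def fs by (simp_all add: sum.If_cases)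
      from assms(4) True
      have "(\<exists>i. y = x(i := \<not> x i)) \<or> (\<exists>i j. x i \<noteq> x j \<and> y = x(i := x j, j := x i))"
        unfolding flip_swap_def by blast
      thus ?thesis
      proof
        assume "\<exists>i. y = x(i := \<not> x i)"
        then obtain i where "y = x(i := \<not> x i)" by blast
        hence "{i. x i \<noteq> y i} = {i}" by auto
        thus ?thesis using sD by simp
      next
        assume "\<exists>i j. x i \<noteq> x j \<and> y = x(i := x j, j := x i)"
        then obtain i j where ij: "x i \<noteq> x j" "y = x(i := x j, j := x i)" by blast
        hence "i \<noteq> j" by auto
        have "{i. x i \<noteq> y i} = {i, j}" using ij by auto
        hence "s = \<alpha> i + \<alpha> j" "Q y = (\<alpha> i)^2 + (\<alpha> j)^2" using sD \<open>i \<noteq> j\<close> by simp_all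
        moreover have "0 \<le> (\<alpha> i - \<alpha> j) * (\<alpha> i - \<alpha> j)" by simp
        ultimately show ?thesis by (simp add: power2_eq_square algebra_simps)
      qed
    qed
    have "(max (m^2 - (dT y A)^2) 0)^2 \<le> 8 * m^2 * Q y"
      by (rule sq_bound[OF dT_nonneg[OF A] s0 d sQ m0])
    thus ?thesis unfolding m_def using True by (intro mult_right_mono) auto
  qed
  have "Gamma_plus L (\<lambda>z. (dT z A)^2) x \<le> (\<Sum>y\<in>UNIV. 8 * m^2 * Q y * L x y)"
    unfolding Gamma_plus_def by (rule sum_mono) (rule pt)
  also have "\<dots> = 8 * m^2 * (\<Sum>i\<in>UNIV. (\<alpha> i)^2 * (\<Sum>y\<in>{y. y i \<noteq> x i}. L x y))"
  proof -
    have "(\<Sum>y\<in>UNIV. Q y * L x y) = (\<Sum>i\<in>UNIV. (\<alpha> i)^2 * (\<Sum>y\<in>{y. y i \<noteq> x i}. L x y))"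
    proof -
      have "(\<Sum>y\<in>UNIV. Q y * L x y) = (\<Sum>y\<in>UNIV. \<Sum>i\<in>UNIV. (\<alpha> i)^2 * (if y i \<noteq> x i then L x y else 0))"
        unfolding Q_def sum_distrib_right by (intro sum.cong refl) auto
      also have "\<dots> = (\<Sum>i\<in>UNIV. \<Sum>y\<in>UNIV. (\<alpha> i)^2 * (if y i \<noteq> x i then L x y else 0))"
        by (rule sum.swap)
      also have "\<dots> = (\<Sum>i\<in>UNIV. (\<alpha> i)^2 * (\<Sum>y\<in>{y. y i \<noteq> x i}. L x y))"
        by (simp add: sum_distrib_left[symmetric] sum.If_cases)
      finally show ?thesis .
    qed
    thus ?thesis by (simp add: sum_distrib_left[symmetric] mult.assoc)
  qed
  also have "\<dots> \<le> 8 * m^2 * (\<Sum>i\<in>UNIV. (\<alpha> i)^2 * (R * rho \<mu> L))"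
    by (intro mult_left_mono sum_mono rs) auto
  also have "\<dots> = 8 * m^2 * (R * rho \<mu> L) * (\<Sum>i\<in>UNIV. (\<alpha> i)^2)"
    by (simp add: sum_distrib_right[symmetric])
  also have "\<dots> \<le> 8 * m^2 * (R * rho \<mu> L) * 1"
    using S1 assms(5) rpos by (intro mult_left_mono) auto
  finally show "Gamma_plus L (\<lambda>z. (dT z A)^2) x \<le> 8 * R * rho \<mu> L * (dT x A)^2"
    unfolding m_def by (simp add: algebra_simps)
qed


end
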